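(* Assume $\mathfrak b=\aleph_1$ and fix the family $\{g_\alpha:\alpha<\omega_1\}$ as below. Let $G \leq {}^\omega 2$ be a subgroup and let $\langle \mathcal T_\alpha : \alpha<\omega_1\rangle$ satisfy properties (i), (ii), (iii) below. Then it also satisfies property (iv); hence it is a $G$-matrix.
   Context: ${}^\omega 2$ is the Cantor space with bitwise addition modulo $2$. $\mathbb S$ is the set of perfect subtrees of ${}^{<\omega}2$ ordered by inclusion; $[T]$ is the set of branches of $T$; for $x\in{}^\omega 2$, $x+T=\{\sigma+x\restriction|\sigma|:\sigma\in T\}$. A node $\sigma\in T$ is splitting if $\sigma^\frown0,\sigma^\frown1\in T$; $T$ is skew if for each $n$ there is at most one splitting node of length $n$. The splitting predecessors of $s\in T$ are the splitting nodes of $T$ properly contained in $s$; $h_T(n)=\min\{k:\text{some node of }T\text{ of length }k\text{ has }n\text{ splitting predecessors}\}$. $g\le^* f$ means $g(n)\le f(n)$ for almost all $n$. $\{g_\alpha:\alpha<\omega_1\}\subseteq{}^\omega\omega$ is fixed with $\alpha<\beta\Rightarrow g_\alpha\le^* g_\beta$ and such that for every $f\in{}^\omega\omega$ there is $\alpha$ with $g_\alpha\not\le^* f$. For $S,T\in\mathbb S$, $S$ is somewhere dense in $T$ if there is $s\in T$ with $T_s=\{t\in T:t\subseteq s\lor s\subseteq t\}\subseteq S$. A $G$-matrix is a sequence $\langle\mathcal T_\alpha:\alpha<\omega_1\rangle$ with $\mathcal T=\bigcup_\alpha\mathcal T_\alpha$ such that: (i) $\mathcal T\subseteq\mathbb S$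 consists of skew trees; (ii) $g_\alpha\le^* h_T$ for all $T\in\mathcal T_\alpha$; (iii) for all $S\neq T$ in $\mathcal T_\alpha$ and all $x\in G$, $x+S$ and $T$ are incompatible (equivalently $|(x+[S])\cap[T]|\le\aleph_0$); (iv) for every $T\in\mathbb S$ the set $\{(x,S)\in G\times\mathcal T: x+S\text{ is somewhere dense in }T\}$ is at most countable. *)

theory Defs
  imports Main "HOL-Library.Countable_Set"
begin

text \<open>Cantor space: nat \<Rightarrow> bool; finite binary sequences: bool list.
  Addition modulo 2 is exclusive or.\<close>

definition cadd :: "(nat \<Rightarrow> bool) \<Rightarrow> (nat \<Rightarrow> bool) \<Rightarrow> (nat \<Rightarrow> bool)" where
  "cadd x y = (\<lambda>n. x n \<noteq> y n)"

definition subgroup2 :: "(nat \<Rightarrow> bool) set \<Rightarrow> bool" where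
  "subgroup2 G \<longleftrightarrow> (\<lambda>_. False) \<in> G \<and> (\<forall>x\<in>G. \<forall>y\<in>G. cadd x y \<in> G)"

definition restr :: "(nat \<Rightarrow> bool) \<Rightarrow> nat \<Rightarrow> bool list" where
  "restr x n = map x [0..<n]"

definition is_prefix :: "bool list \<Rightarrow> bool list \<Rightarrow> bool" where
  "is_prefix s t \<longleftrightarrow> length s \<le> length t \<and> take (length s) t = s"

definition is_tree :: "bool list set \<Rightarrow> bool" where
  "is_tree T \<longleftrightarrow> (\<forall>t\<in>T. \<forall>s. is_prefix s t \<longrightarrow> s \<in> T)"

definition splitting :: "bool list set \<Rightarrow> bool list \<Rightarrow> bool" where
  "splitting T s \<longleftrightarrow> s \<in> T \<and> s @ [False] \<in> T \<and> s @ [True] \<in> T"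

definition perfect_tree :: "bool list set \<Rightarrow> bool" where
  "perfect_tree T \<longleftrightarrow> is_tree T \<and> T \<noteq> {} \<and>
     (\<forall>s\<in>T. \<exists>t. is_prefix s t \<and> splitting T t)"

definition branches :: "bool list set \<Rightarrow> (nat \<Rightarrow> bool) set" where
  "branches T = {x. \<forall>n. restr x n \<in> T}"

definition shift_tree :: "(nat \<Rightarrow> bool) \<Rightarrow> bool list set \<Rightarrow> bool list set" where
  "shift_tree x T = {map (\<lambda>i. (\<sigma> ! i) \<noteq> x i) [0..<length \<sigma>] | \<sigma>. \<sigma> \<in> T}"

definition skew :: "bool list set \<Rightarrow> bool" where
  "skew T \<longleftrightarrow> (\<forall>n. \<forall>s t. splitting T s \<and> splitting T t \<and> length s = n \<and> length t = n \<longrightarrow> s = t)"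

definition split_preds :: "bool list set \<Rightarrow> bool list \<Rightarrow> bool list set" where
  "split_preds T s = {t. splitting T t \<and> is_prefix t s \<and> t \<noteq> s}"

definition hT :: "bool list set \<Rightarrow> nat \<Rightarrow> nat" where
  "hT T n = (LEAST k. \<exists>s\<in>T. length s = k \<and> card (split_preds T s) = n)"

definition le_star :: "(nat \<Rightarrow> nat) \<Rightarrow> (nat \<Rightarrow> nat) \<Rightarrow> bool" where
  "le_star g f \<longleftrightarrow> (\<exists>N. \<forall>n\<ge>N. g n \<le> f n)"

definition compatible :: "bool list set \<Rightarrow> bool list set \<Rightarrow> bool" where
  "compatible S T \<longleftrightarrow> (\<exists>R. perfect_tree R \<and> R \<subseteq> S \<and> R \<subseteq> T)"

definition subtree_at :: "bool list set \<Rightarrow> bool list \<Rightarrow> bool list set" where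
  "subtree_at T s = {t\<in>T. is_prefix t s \<or> is_prefix s t}"

definition somewhere_dense :: "bool list set \<Rightarrow> bool list set \<Rightarrow> bool" where
  "somewhere_dense S T \<longleftrightarrow> (\<exists>s\<in>T. subtree_at T s \<subseteq> S)"

text \<open>The index type 'a plays the role of omega_1: an uncountable well-order all of
  whose proper initial segments are countable.\<close>
definition is_omega1 :: "'a::wellorder itself \<Rightarrow> bool" where
  "is_omega1 _ \<longleftrightarrow> uncountable (UNIV :: 'a set) \<and> (\<forall>\<alpha>::'a. countable {\<beta>. \<beta> < \<alpha>})"

definition G_matrix ::
  "('a::wellorder \<Rightarrow> nat \<Rightarrow> nat) \<Rightarrow> (nat \<Rightarrow> bool) set \<Rightarrow> ('a \<Rightarrow> bool list set set) \<Rightarrow> bool" where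
  "G_matrix g G Tm \<longleftrightarrow>
     (\<forall>\<alpha>. \<forall>T\<in>Tm \<alpha>. perfect_tree T \<and> skew T) \<and>
     (\<forall>\<alpha>. \<forall>T\<in>Tm \<alpha>. le_star (g \<alpha>) (hT T)) \<and>
     (\<forall>\<alpha>. \<forall>S\<in>Tm \<alpha>. \<forall>T\<in>Tm \<alpha>. S \<noteq> T \<longrightarrow> (\<forall>x\<in>G. \<not> compatible (shift_tree x S) T)) \<and>
     (\<forall>T. perfect_tree T \<longrightarrow>
        countable {(x, S). x \<in> G \<and> S \<in> (\<Union>\<alpha>. Tm \<alpha>) \<and> somewhere_dense (shift_tree x S) T})"

end

theory Submission
  imports Defs "HOL-Library.Sublist"
begin

definition sh :: "(nat \<Rightarrow> bool) \<Rightarrow> bool list \<Rightarrow> bool list" where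
  "sh x \<sigma> = map (\<lambda>i. (\<sigma> ! i) \<noteq> x i) [0..<length \<sigma>]"

lemma shift_tree_sh: "shift_tree x T = sh x ` T"
  unfolding shift_tree_def sh_def by auto

lemma length_sh[simp]: "length (sh x s) = length s" by (simp add: sh_def)
lemma nth_sh[simp]: "i < length s \<Longrightarrow> sh x s ! i = (s ! i \<noteq> x i)" by (simp add: sh_def)
lemma sh_sh[simp]: "sh x (sh x s) = s" by (rule nth_equalityI) auto
lemma inj_sh: "inj (sh x)" by (metis injI sh_sh)
lemma sh_eq_iff[simp]: "sh x s = sh x t \<longleftrightarrow> s = t" by (metis sh_sh)
lemma sh_take: "sh x (take k s) = take k (sh x s)" by (rule nth_equalityI) auto
lemma sh_snoc: "sh x (s @ [b]) = sh x s @ [b \<noteq> x (length s)]"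
  by (rule nth_equalityI) (auto simp: nth_append less_Suc_eq)
lemma sh_image_sh[simp]: "sh x ` sh x ` S = S"
  by (simp add: image_comp comp_def)
lemma mem_sh_image: "t \<in> sh x ` T \<longleftrightarrow> sh x t \<in> T"
  by (metis image_iff sh_sh)

lemma is_prefix_iff: "is_prefix s t \<longleftrightarrow> prefix s t"
  unfolding is_prefix_def prefix_def
  by (metis append_eq_conv_conj append_take_drop_id length_append le_add1)

lemma prefix_sh: "prefix (sh x s) (sh x t) \<longleftrightarrow> prefix s t"
proof -
  have "is_prefix (sh x s) (sh x t) \<longleftrightarrow> is_prefix s t"
    unfolding is_prefix_def by (metis length_sh sh_eq_iff sh_take)
  thus ?thesis by (simp add: is_prefix_iff)
qed

lemma prefix_take_eq: "prefix t s \<Longrightarrow> t = take (length t) s"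
  by (metis append_eq_conv_conj prefix_def)

lemma splitting_sh: "splitting (sh x ` T) (sh x s) \<longleftrightarrow> splitting T s"
proof -
  have e0: "sh x s @ [False] = sh x (s @ [x (length s)])"
    and e1: "sh x s @ [True] = sh x (s @ [\<not> x (length s)])" by (simp_all add: sh_snoc)
  show ?thesis unfolding splitting_def e0 e1 mem_sh_image sh_sh
    by (cases "x (length s)") auto
qed

lemma split_preds_sh: "split_preds (sh x ` T) (sh x s) = sh x ` split_preds T s"
proof
  show "sh x ` split_preds T s \<subseteq> split_preds (sh x ` T) (sh x s)"
    unfolding split_preds_def using splitting_sh prefix_sh is_prefix_iff by auto
next
  show "split_preds (sh x ` T) (sh x s) \<subseteq> sh x ` split_preds T s"
  proof
    fix t assume t: "t \<in> split_preds (sh x ` T) (sh x s)"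
    have "sh x t \<in> split_preds T s"
      using t unfolding split_preds_def is_prefix_iff
      by (metis (mono_tags) mem_Collect_eq prefix_sh sh_sh splitting_sh)
    thus "t \<in> sh x ` split_preds T s" by (metis image_eqI sh_sh)
  qed
qed

lemma hT_sh: "hT (sh x ` T) = hT T"
proof (rule ext)
  fix n
  have "(\<exists>s'\<in>sh x ` T. length s' = k \<and> card (split_preds (sh x ` T) s') = n)
        \<longleftrightarrow> (\<exists>s\<in>T. length s = k \<and> card (split_preds T s) = n)" for k
    by (simp add: split_preds_sh card_image inj_on_subset[OF inj_sh])
  thus "hT (sh x ` T) n = hT T n" unfolding hT_def by simp
qed

lemma perfect_sh:
  assumes "perfect_tree T" shows "perfect_tree (sh x ` T)"
proof -
  have tr: "is_tree T" and ne: "T \<noteq> {}" and sp: "\<forall>s\<in>T. \<exists>t. is_prefix s t \<and> splitting T t"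
    using assms unfolding perfect_tree_def by auto
  have "is_tree (sh x ` T)"
    unfolding is_tree_def
  proof (intro ballI allI impI)
    fix t s assume "t \<in> sh x ` T" "is_prefix s t"
    then obtain u where u: "u \<in> T" "t = sh x u" by auto
    have "prefix (sh x s) u" using \<open>is_prefix s t\<close> u
      by (metis is_prefix_iff prefix_sh sh_sh)
    hence "sh x s \<in> T" using tr u unfolding is_tree_def is_prefix_iff by blast
    thus "s \<in> sh x ` T" by (simp add: mem_sh_image)
  qed
  moreover have "\<forall>s\<in>sh x ` T. \<exists>t. is_prefix s t \<and> splitting (sh x ` T) t"
  proof
    fix s assume "s \<in> sh x ` T"
    then obtain u where u: "u \<in> T" "s = sh x u" by auto
    then obtain t where "is_prefix u t" "splitting T t" using sp by blast
    thus "\<exists>t. is_prefix s t \<and> splitting (sh x ` T) t"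
      using u by (metis is_prefix_iff prefix_sh splitting_sh)
  qed
  ultimately show ?thesis using ne unfolding perfect_tree_def by auto
qed

lemma perfect_subtree_at:
  assumes "perfect_tree T" "s \<in> T" shows "perfect_tree (subtree_at T s)"
proof -
  have tr: "is_tree T" and sp: "\<forall>s\<in>T. \<exists>t. is_prefix s t \<and> splitting T t"
    using assms unfolding perfect_tree_def by auto
  have trp: "\<And>t u. t \<in> T \<Longrightarrow> prefix u t \<Longrightarrow> u \<in> T"
    using tr unfolding is_tree_def is_prefix_iff by blast
  have "is_tree (subtree_at T s)"
    unfolding is_tree_def is_prefix_iff
  proof (intro ballI allI impI)
    fix t u assume t: "t \<in> subtree_at T s" and u: "prefix u t"
    have tT: "t \<in> T" and c: "prefix t s \<or> prefix s t" using t unfolding subtree_at_def is_prefix_iff by auto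
    have "u \<in> T" using trp[OF tT u] .
    moreover have "prefix u s \<or> prefix s u"
    proof (cases "prefix t s")
      case True thus ?thesis using u prefix_order.order_trans by blast
    next
      case False hence "prefix s t" using c by blast
      thus ?thesis using u prefix_same_cases by blast
    qed
    ultimately show "u \<in> subtree_at T s" unfolding subtree_at_def is_prefix_iff by blast
  qed
  moreover have "\<forall>u\<in>subtree_at T s. \<exists>t. is_prefix u t \<and> splitting (subtree_at T s) t"
  proof
    fix u assume u: "u \<in> subtree_at T s"
    define v where "v = (if prefix s u then u else s)"
    have v: "v \<in> T" "prefix u v" "prefix s v"
      using u assms(2) unfolding v_def subtree_at_def is_prefix_iff by auto
    then obtain t where t: "prefix v t" "splitting T t" using sp is_prefix_iff by blast
    have st: "prefix s t" using v(3) t(1) prefix_order.order_trans by blast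
    have "prefix s (t @ [b])" for b using st by (simp add: prefix_snoc)
    hence "splitting (subtree_at T s) t"
      using t(2) st unfolding splitting_def subtree_at_def is_prefix_iff by blast
    moreover have "prefix u t" using v(2) t(1) prefix_order.order_trans by blast
    ultimately show "\<exists>t. is_prefix u t \<and> splitting (subtree_at T s) t"
      using is_prefix_iff by blast
  qed
  moreover have "subtree_at T s \<noteq> {}" using assms(2) unfolding subtree_at_def is_prefix_iff by auto
  ultimately show ?thesis unfolding perfect_tree_def by auto
qed

lemma finite_split_preds: "finite (split_preds U s)"
proof -
  have "split_preds U s \<subseteq> (\<lambda>j. take j s) ` {..length s}"
    unfolding split_preds_def is_prefix_iff
    by (auto intro!: image_eqI prefix_take_eq simp: prefix_length_le)
  thus ?thesis by (rule finite_subset) simp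
qed

lemma split_preds_Nil: "split_preds U [] = {}"
  unfolding split_preds_def is_prefix_iff by auto

lemma split_preds_step:
  "split_preds U (take (Suc j) r) \<subseteq> insert (take j r) (split_preds U (take j r))"
proof
  fix t assume t: "t \<in> split_preds U (take (Suc j) r)"
  hence p: "prefix t (take (Suc j) r)" "t \<noteq> take (Suc j) r" "splitting U t"
    unfolding split_preds_def is_prefix_iff by auto
  show "t \<in> insert (take j r) (split_preds U (take j r))"
  proof (cases "t = take j r")
    case False
    have e: "t = take (length t) (take (Suc j) r)" using prefix_take_eq[OF p(1)] .
    have le: "length t \<le> length (take (Suc j) r)" using prefix_length_le[OF p(1)] .
    have "length t \<noteq> length (take (Suc j) r)" using e p(2) by (metis take_all order_refl)
    hence "length t \<le> j" using le by (auto simp: min_def split: if_splits)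
    hence "t = take (length t) (take j r)" using e by (simp add: min_def)
    hence "prefix t (take j r)" by (metis take_is_prefix)
    thus ?thesis using p False unfolding split_preds_def is_prefix_iff by auto
  qed simp
qed

lemma split_preds_IVT:
  assumes "n \<le> card (split_preds U r)"
  shows "\<exists>j\<le>length r. card (split_preds U (take j r)) = n"
proof -
  define p where "p j = card (split_preds U (take j r))" for j
  have p0: "p 0 = 0" unfolding p_def by (simp add: split_preds_Nil)
  have pS: "p (Suc j) \<le> Suc (p j)" for j
  proof -
    have "p (Suc j) \<le> card (insert (take j r) (split_preds U (take j r)))"
      unfolding p_def apply (rule card_mono) apply (simp add: finite_split_preds)
      using split_preds_step by blast
    also have "\<dots> \<le> Suc (p j)" unfolding p_def
      by (simp add: card_insert_if finite_split_preds)
    finally show ?thesis .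
  qed
  have "\<forall>n\<le>p k. \<exists>j\<le>k. p j = n" for k
  proof (induction k)
    case 0 thus ?case using p0 by auto
  next
    case (Suc k)
    show ?case
    proof (intro allI impI)
      fix n assume "n \<le> p (Suc k)"
      show "\<exists>j\<le>Suc k. p j = n"
      proof (cases "n \<le> p k")
        case True thus ?thesis using Suc.IH by (meson le_Suc_eq)
      next
        case False
        hence "n = p (Suc k)" using pS[of k] \<open>n \<le> p (Suc k)\<close> by linarith
        thus ?thesis by blast
      qed
    qed
  qed
  from this[of "length r"] assms show ?thesis unfolding p_def by simp
qed

lemma splitting_mono: "R \<subseteq> U \<Longrightarrow> splitting R t \<Longrightarrow> splitting U t"
  unfolding splitting_def by auto

lemma split_preds_mono: "R \<subseteq> U \<Longrightarrow> split_preds R s \<subseteq> split_preds U s"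
  unfolding split_preds_def using splitting_mono by blast

lemma exists_ge:
  assumes "perfect_tree R" shows "\<exists>r\<in>R. n \<le> card (split_preds R r)"
proof (induction n)
  case 0 thus ?case using assms unfolding perfect_tree_def by auto
next
  case (Suc n)
  then obtain s where s: "s \<in> R" "n \<le> card (split_preds R s)" by blast
  then obtain t where t: "prefix s t" "splitting R t"
    using assms unfolding perfect_tree_def is_prefix_iff by blast
  have "insert t (split_preds R s) \<subseteq> split_preds R (t @ [False])"
  proof
    fix u assume u: "u \<in> insert t (split_preds R s)"
    show "u \<in> split_preds R (t @ [False])"
    proof (cases "u = t")
      case True thus ?thesis using t unfolding split_preds_def is_prefix_iff by auto
    next
      case False
      hence u: "splitting R u" "prefix u s" "u \<noteq> s" using u unfolding split_preds_def is_prefix_iff by auto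
      have "prefix u (t @ [False])" using u t by (meson prefix_order.order_trans prefix_snoc)
      moreover have "u \<noteq> t @ [False]"
      proof
        assume "u = t @ [False]"
        hence "length t + 1 \<le> length s" using u by (metis length_append_singleton prefix_length_le Suc_eq_plus1)
        thus False using t prefix_length_le by fastforce
      qed
      ultimately show ?thesis using u unfolding split_preds_def is_prefix_iff by auto
    qed
  qed
  moreover have "t \<notin> split_preds R s"
    using t unfolding split_preds_def is_prefix_iff by (auto dest: prefix_order.antisym)
  ultimately have "Suc n \<le> card (split_preds R (t @ [False]))"
    using s(2) by (metis card_insert_disjoint card_mono finite_split_preds Suc_le_mono
        order_trans)
  moreover have "t @ [False] \<in> R" using t unfolding splitting_def by auto
  ultimately show ?case by blast
qed

lemma exists_eq:
  assumes "perfect_tree R" shows "\<exists>r\<in>R. card (split_preds R r) = n"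
proof -
  obtain r where r: "r \<in> R" "n \<le> card (split_preds R r)" using exists_ge[OF assms] by blast
  then obtain j where "card (split_preds R (take j r)) = n" using split_preds_IVT by blast
  moreover have "take j r \<in> R" using assms r unfolding perfect_tree_def is_tree_def is_prefix_iff
    by (meson take_is_prefix)
  ultimately show ?thesis by blast
qed

lemma hT_mono:
  assumes U: "is_tree U" and R: "perfect_tree R" and sub: "R \<subseteq> U"
  shows "hT U n \<le> hT R n"
proof -
  have "\<exists>k. \<exists>s\<in>R. length s = k \<and> card (split_preds R s) = n" using exists_eq[OF R] by blast
  from LeastI_ex[OF this] obtain r where r: "r \<in> R" "length r = hT R n"
    "card (split_preds R r) = n" unfolding hT_def by blast
  have "n \<le> card (split_preds U r)"
    using r(3) split_preds_mono[OF sub] by (metis card_mono finite_split_preds)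
  then obtain j where j: "j \<le> length r" "card (split_preds U (take j r)) = n"
    using split_preds_IVT by blast
  have "take j r \<in> U" using U r sub unfolding is_tree_def is_prefix_iff
    by (meson subsetD take_is_prefix)
  hence "hT U n \<le> length (take j r)" unfolding hT_def using j by (intro Least_le) blast
  thus ?thesis using j r by simp
qed

lemma long_splitting:
  assumes "perfect_tree R" shows "\<exists>t. splitting R t \<and> m \<le> length t"
proof (induction m)
  case 0 thus ?case using assms unfolding perfect_tree_def by blast
next
  case (Suc m)
  then obtain t where t: "splitting R t" "m \<le> length t" by blast
  hence "t @ [False] \<in> R" unfolding splitting_def by auto
  then obtain t' where a: "prefix (t @ [False]) t'" and "splitting R t'"
    using assms unfolding perfect_tree_def is_prefix_iff by blast
  moreover have "length (t @ [False]) \<le> length t'" using a by (rule prefix_length_le)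
  ultimately show ?case using t by (metis Suc_le_mono length_append_singleton order_trans)
qed

lemma skew_unique:
  assumes S: "skew S" and R: "perfect_tree R"
    and a: "sh x ` R \<subseteq> S" and b: "sh y ` R \<subseteq> S"
  shows "x = y"
proof (rule ccontr)
  assume "x \<noteq> y"
  then obtain m where m: "x m \<noteq> y m" by blast
  obtain t where t: "splitting R t" "Suc m \<le> length t" using long_splitting[OF R] by blast
  have "splitting S (sh x t)" "splitting S (sh y t)"
    using splitting_mono[OF a] splitting_mono[OF b] splitting_sh t(1) by blast+
  hence "sh x t = sh y t" using S unfolding skew_def by (metis length_sh)
  hence "sh x t ! m = sh y t ! m" by simp
  thus False using m t(2) by (cases "t ! m"; cases "y m") auto
qed


theorem mainTheorem16:
  fixes g :: "'a::wellorder \<Rightarrow> nat \<Rightarrow> nat"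
    and G :: "(nat \<Rightarrow> bool) set"
    and Tm :: "'a \<Rightarrow> bool list set set"
  assumes omega1: "is_omega1 TYPE('a)"
    and g_mono: "\<forall>\<alpha> \<beta>. \<alpha> < \<beta> \<longrightarrow> le_star (g \<alpha>) (g \<beta>)"
    and g_unbounded: "\<forall>f. \<exists>\<alpha>. \<not> le_star (g \<alpha>) f"
    and G_sub: "subgroup2 G"
    and prop_i: "\<forall>\<alpha>. \<forall>T\<in>Tm \<alpha>. perfect_tree T \<and> skew T"
    and prop_ii: "\<forall>\<alpha>. \<forall>T\<in>Tm \<alpha>. le_star (g \<alpha>) (hT T)"
    and prop_iii: "\<forall>\<alpha>. \<forall>S\<in>Tm \<alpha>. \<forall>T\<in>Tm \<alpha>. S \<noteq> T \<longrightarrow>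
                     (\<forall>x\<in>G. \<not> compatible (shift_tree x S) T)"
  shows "(\<forall>T. perfect_tree T \<longrightarrow>
           countable {(x, S). x \<in> G \<and> S \<in> (\<Union>\<alpha>. Tm \<alpha>) \<and> somewhere_dense (shift_tree x S) T})
         \<and> G_matrix g G Tm"
proof -
  have ctbl_lt: "\<And>\<beta>::'a. countable {\<gamma>. \<gamma> < \<beta>}" using omega1 unfolding is_omega1_def by blast
  have key: "countable {(x, S). x \<in> G \<and> S \<in> (\<Union>\<alpha>. Tm \<alpha>) \<and> somewhere_dense (shift_tree x S) T}"
    if T: "perfect_tree T" for T
  proof -
    define Ts where "Ts s = subtree_at T s" for s
    define A where "A s = {\<alpha>. \<exists>S\<in>Tm \<alpha>. \<exists>x\<in>G. sh x ` Ts s \<subseteq> S}" for s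
    define Q where "Q s \<alpha> = {(x, S). x \<in> G \<and> S \<in> Tm \<alpha> \<and> sh x ` Ts s \<subseteq> S}" for s \<alpha>
    have Tsp: "perfect_tree (Ts s)" if "s \<in> T" for s
      unfolding Ts_def using perfect_subtree_at[OF T that] .
    have sub: "{(x, S). x \<in> G \<and> S \<in> (\<Union>\<alpha>. Tm \<alpha>) \<and> somewhere_dense (shift_tree x S) T}
               \<subseteq> (\<Union>s\<in>T. \<Union>\<alpha>\<in>A s. Q s \<alpha>)"
    proof
      fix p assume "p \<in> {(x, S). x \<in> G \<and> S \<in> (\<Union>\<alpha>. Tm \<alpha>) \<and> somewhere_dense (shift_tree x S) T}"
      then obtain x S \<alpha> where p: "p = (x, S)" "x \<in> G" "S \<in> Tm \<alpha>"
        "somewhere_dense (shift_tree x S) T" by blast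
      then obtain s where s: "s \<in> T" "Ts s \<subseteq> sh x ` S"
        unfolding somewhere_dense_def shift_tree_sh Ts_def by blast
      have "sh x ` Ts s \<subseteq> S" using image_mono[OF s(2), of "sh x"] by simp
      hence "\<alpha> \<in> A s" "p \<in> Q s \<alpha>" using p unfolding A_def Q_def by auto
      thus "p \<in> (\<Union>s\<in>T. \<Union>\<alpha>\<in>A s. Q s \<alpha>)" using s(1) by blast
    qed
    have cA: "countable (A s)" if s: "s \<in> T" for s
    proof (rule ccontr)
      assume unc: "\<not> countable (A s)"
      define f where "f = hT (Ts s)"
      have bnd: "le_star (g \<alpha>) f" if aA: "\<alpha> \<in> A s" for \<alpha>
      proof -
        obtain S x where Sx: "S \<in> Tm \<alpha>" "x \<in> G" "sh x ` Ts s \<subseteq> S" using aA unfolding A_def by blast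
        have "perfect_tree S" using prop_i Sx(1) by blast
        hence "is_tree S" unfolding perfect_tree_def by blast
        have "hT S n \<le> hT (sh x ` Ts s) n" for n
          by (rule hT_mono[OF \<open>is_tree S\<close> perfect_sh[OF Tsp[OF s]] Sx(3)])
        hence le: "hT S n \<le> f n" for n unfolding f_def hT_sh by simp
        obtain N where "\<forall>n\<ge>N. g \<alpha> n \<le> hT S n" using prop_ii Sx(1) unfolding le_star_def by blast
        hence "\<forall>n\<ge>N. g \<alpha> n \<le> f n" using le le_trans by blast
        thus ?thesis unfolding le_star_def by blast
      qed
      have "le_star (g \<beta>) f" for \<beta>
      proof -
        have "\<exists>\<alpha>\<in>A s. \<beta> < \<alpha>"
        proof (rule ccontr)
          assume "\<not> (\<exists>\<alpha>\<in>A s. \<beta> < \<alpha>)"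
          hence nb: "\<And>\<alpha>. \<alpha> \<in> A s \<Longrightarrow> \<not> \<beta> < \<alpha>" by blast
          have "A s \<subseteq> insert \<beta> {\<gamma>. \<gamma> < \<beta>}"
          proof
            fix \<alpha> assume "\<alpha> \<in> A s"
            hence "\<not> \<beta> < \<alpha>" by (rule nb)
            hence "\<alpha> \<le> \<beta>" by (rule leI)
            hence "\<alpha> = \<beta> \<or> \<alpha> < \<beta>" by (metis le_less)
            thus "\<alpha> \<in> insert \<beta> {\<gamma>. \<gamma> < \<beta>}" by blast
          qed
          hence "countable (A s)" by (rule countable_subset) (rule countable_insert[OF ctbl_lt])
          thus False using unc by blast
        qed
        then obtain \<alpha> where \<alpha>: "\<alpha> \<in> A s" "\<beta> < \<alpha>" by blast
        obtain N1 where N1: "\<forall>n\<ge>N1. g \<beta> n \<le> g \<alpha> n" using g_mono \<alpha>(2) unfolding le_star_def by blast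
        obtain N2 where N2: "\<forall>n\<ge>N2. g \<alpha> n \<le> f n" using bnd[OF \<alpha>(1)] unfolding le_star_def by blast
        have "\<forall>n\<ge>max N1 N2. g \<beta> n \<le> f n"
        proof (intro allI impI)
          fix n assume "max N1 N2 \<le> n"
          hence "g \<beta> n \<le> g \<alpha> n" "g \<alpha> n \<le> f n" using N1 N2 by auto
          thus "g \<beta> n \<le> f n" by (rule le_trans)
        qed
        thus ?thesis unfolding le_star_def by blast
      qed
      thus False using g_unbounded by blast
    qed
    have cQ: "countable (Q s \<alpha>)" if s: "s \<in> T" for s \<alpha>
    proof -
      have uniq: "p = q" if "p \<in> Q s \<alpha>" "q \<in> Q s \<alpha>" for p q
      proof -
        obtain x S where p: "p = (x, S)" "x \<in> G" "S \<in> Tm \<alpha>" "sh x ` Ts s \<subseteq> S"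
          using \<open>p \<in> Q s \<alpha>\<close> unfolding Q_def by blast
        obtain y S' where q: "q = (y, S')" "y \<in> G" "S' \<in> Tm \<alpha>" "sh y ` Ts s \<subseteq> S'"
          using \<open>q \<in> Q s \<alpha>\<close> unfolding Q_def by blast
        have SS: "S = S'"
        proof (rule ccontr)
          assume ne: "S \<noteq> S'"
          have xy: "cadd x y \<in> G" using G_sub p(2) q(2) unfolding subgroup2_def by blast
          have shc: "sh (cadd x y) u = sh y (sh x u)" for u
            by (rule nth_equalityI) (auto simp: cadd_def)
          have "sh y ` Ts s = sh (cadd x y) ` sh x ` Ts s"
            by (simp add: image_comp comp_def shc)
          also have "\<dots> \<subseteq> sh (cadd x y) ` S" using p(4) by (rule image_mono)
          finally have "sh y ` Ts s \<subseteq> shift_tree (cadd x y) S" by (simp add: shift_tree_sh)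
          hence "compatible (shift_tree (cadd x y) S) S'"
            unfolding compatible_def using q(4) perfect_sh[OF Tsp[OF s]] by blast
          moreover have "\<not> compatible (shift_tree (cadd x y) S) S'"
            using prop_iii p(3) q(3) ne xy by blast
          ultimately show False by contradiction
        qed
        have "skew S" using prop_i p(3) by blast
        hence "x = y" using skew_unique[OF _ Tsp[OF s]] p(4) q(4) SS by blast
        thus ?thesis using p q SS by simp
      qed
      show ?thesis
      proof (cases "Q s \<alpha> = {}")
        case False
        then obtain p where "p \<in> Q s \<alpha>" by blast
        hence "Q s \<alpha> \<subseteq> {p}" using uniq by blast
        thus ?thesis by (rule countable_subset) simp
      qed simp
    qed
    have "countable (\<Union>s\<in>T. \<Union>\<alpha>\<in>A s. Q s \<alpha>)"
    proof (rule countable_UN)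
      show "countable T" by simp
      fix s assume "s \<in> T"
      show "countable (\<Union>\<alpha>\<in>A s. Q s \<alpha>)"
        using cA[OF \<open>s \<in> T\<close>] cQ[OF \<open>s \<in> T\<close>] by (rule countable_UN)
    qed
    with sub show ?thesis by (rule countable_subset)
  qed
  have "\<forall>T. perfect_tree T \<longrightarrow>
           countable {(x, S). x \<in> G \<and> S \<in> (\<Union>\<alpha>. Tm \<alpha>) \<and> somewhere_dense (shift_tree x S) T}"
    using key by blast
  moreover hence "G_matrix g G Tm" unfolding G_matrix_def using prop_i prop_ii prop_iii by (intro conjI)
  ultimately show ?thesis by (rule conjI)
qed

end
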